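(* Fix $\epsilon\in(0,1)$ and $\alpha,\beta>0$ with $\alpha+\beta\le\epsilon/4$. Let $M$ be an ordered matching on $2n^{1/2+\alpha}$ vertices with interval chromatic number $2$, such that its corresponding permutation $\pi=\pi(M)$ satisfies $\mathrm{Int}(\pi,\pi+h)\le n^{(1-\epsilon)(1/2+\alpha)}$ for every $h\in[n^{1/2+\alpha}]$. Then every red/blue coloring of the edges of the ordered complete graph on $[2n]$ contains either (i) a blue triangle, (ii) a red clique on at least $n^{1/2+\beta}/4-n^{\epsilon/4}/2$ vertices, or (iii) a red ordered copy of $M$ within the bipartite subgraph between $[1,n]$ and $[n+1,2n]$ (i.e., the first half of the vertices of $M$ are mapped into $[1,n]$ and the second half into $[n+1,2n]$).
   Context: An ordered graph on $[N]$ is a graph with vertex set $\{1,\dots,N\}$ with the natural order; a red ordered copy of an ordered graph $G$ on $[p]$ in a red/blue coloring of the complete graph on $[N]$ is a strictly increasing map $\varphi:[p]\to[N]$ with $\varphi(u)\varphi(v)$ red for every edge $uv$ of $G$. The interval chromatic number of an ordered graph is the minimum number of contiguous intervals into which the vertex set can be split so that each interval is independent. An ordered matching $M$ on $[2m]$ with interval chromatic number $2$ has every edge between $[1,m]$ and $[m+1,2m]$; its corresponding permutation $\pi(M)\in S_m$ maps $i$ to $j-m$ for every edge $\{i,j\}$ of $M$ with $i\le m<j$. For a sequence $\sigma=(\sigma(1),\dots,\sigma(m))$ of distinct integers, an exact pattern of $\sigma$ is a sequence $\rho=(\rho(1),\dots,\rho(k))$ such that there are indices $1\le i_1<\dots<i_k\le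 m$ with $\sigma(i_j)=\rho(j)$ for all $j$. For $\pi\in S_m$ and an integer $h$, $\pi+h$ denotes the sequence $(\pi(1)+h,\dots,\pi(m)+h)$. The ordered intersection $\mathrm{Int}(\sigma,\tau)$ of two such sequences is the largest $k$ such that $\sigma$ and $\tau$ share a common exact pattern of length $k$. *)

theory Defs
  imports "HOL-Analysis.Analysis" "HOL-Library.Sublist"
begin

definition exact_pattern :: "int list \<Rightarrow> int list \<Rightarrow> bool" where
  "exact_pattern \<rho> \<sigma> \<longleftrightarrow> subseq \<rho> \<sigma>"

definition ord_int :: "int list \<Rightarrow> int list \<Rightarrow> nat" where
  "ord_int \<sigma> \<tau> = Max {length \<rho> | \<rho>. exact_pattern \<rho> \<sigma> \<and> exact_pattern \<rho> \<tau>}"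

text \<open>An ordered matching on [2m] with interval chromatic number 2, given (as in the paper)
  with every edge between [1,m] and [m+1,2m]: edges are represented as pairs (i,j) with
  i in [1,m] and j in [m+1,2m]; every vertex of [2m] lies in exactly one edge
  (the corresponding permutation lies in S_m).\<close>

definition bip_ordered_matching :: "nat \<Rightarrow> (nat \<times> nat) set \<Rightarrow> bool" where
  "bip_ordered_matching m M \<longleftrightarrow>
     (\<forall>(i,j)\<in>M. i \<in> {1..m} \<and> j \<in> {m+1..2*m}) \<and>
     (\<forall>i\<in>{1..m}. \<exists>!j. (i,j) \<in> M) \<and>
     (\<forall>j\<in>{m+1..2*m}. \<exists>!i. (i,j) \<in> M)"

definition match_perm :: "nat \<Rightarrow> (nat \<times> nat) set \<Rightarrow> nat \<Rightarrow> nat" where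
  "match_perm m M i = (THE j. (i, j + m) \<in> M)"

definition perm_seq :: "nat \<Rightarrow> (nat \<Rightarrow> nat) \<Rightarrow> int list" where
  "perm_seq m \<pi> = map (\<lambda>i. int (\<pi> i)) [1..<m+1]"

definition shift_seq :: "int list \<Rightarrow> int \<Rightarrow> int list" where
  "shift_seq \<sigma> h = map (\<lambda>x. x + h) \<sigma>"

text \<open>Red/blue colouring of the complete graph on [N]: red e says edge e (a 2-set) is red,
  otherwise it is blue.\<close>

definition blue_triangle :: "nat \<Rightarrow> (nat set \<Rightarrow> bool) \<Rightarrow> bool" where
  "blue_triangle N red \<longleftrightarrow> (\<exists>a b c. 1 \<le> a \<and> a < b \<and> b < c \<and> c \<le> N \<and>
      \<not> red {a,b} \<and> \<not> red {a,c} \<and> \<not> red {b,c})"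

definition red_clique :: "nat \<Rightarrow> (nat set \<Rightarrow> bool) \<Rightarrow> nat set \<Rightarrow> bool" where
  "red_clique N red K \<longleftrightarrow> K \<subseteq> {1..N} \<and> (\<forall>x\<in>K. \<forall>y\<in>K. x \<noteq> y \<longrightarrow> red {x,y})"

definition red_bip_copy :: "nat \<Rightarrow> (nat set \<Rightarrow> bool) \<Rightarrow> nat \<Rightarrow> (nat \<times> nat) set \<Rightarrow> bool" where
  "red_bip_copy n red m M \<longleftrightarrow> (\<exists>\<phi>::nat \<Rightarrow> nat.
      strict_mono_on {1..2*m} \<phi> \<and>
      \<phi> ` {1..m} \<subseteq> {1..n} \<and> \<phi> ` {m+1..2*m} \<subseteq> {n+1..2*n} \<and>
      (\<forall>(i,j)\<in>M. red {\<phi> i, \<phi> j}))"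

end

theory Submission
  imports Defs
begin

lemma common_pattern:
  fixes p g :: "nat \<Rightarrow> nat" and I :: "nat set" and h m :: nat
  assumes I: "I \<subseteq> {1..m}" and gI: "g ` I \<subseteq> {1..m}" and sm: "strict_mono_on I g"
    and eq: "\<forall>i\<in>I. p i = p (g i) + h"
  shows "card I \<le> ord_int (perm_seq m p) (shift_seq (perm_seq m p) (int h))"
proof -
  have fI: "finite I" using I finite_subset by blast
  define L where "L = sorted_list_of_set I"
  define \<rho> where "\<rho> = map (\<lambda>i. int (p i)) L"
  have L1: "L = filter (\<lambda>x. x \<in> I) [1..<m+1]"
    unfolding L_def
    by (rule sorted_distinct_set_unique[symmetric]) (use I fI in \<open>auto simp del: upt_Suc intro: sorted_wrt_filter\<close>)
  have s1: "subseq \<rho> (perm_seq m p)"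
    unfolding \<rho>_def perm_seq_def L1 by (rule subseq_map) simp
  have ssL: "sorted_wrt (<) L" unfolding L_def by simp
  have setL: "set L = I" unfolding L_def using fI by simp
  have injg: "inj_on g I" using sm strict_mono_on_imp_inj_on by blast
  have srt: "sorted_wrt (<) (map g L)"
    using ssL setL sm unfolding sorted_wrt_map
    by (auto intro: sorted_wrt_mono_rel[of _ "(<)"] simp: strict_mono_on_def)
  have L2: "sorted_list_of_set (g ` I) = map g L"
    apply (rule sorted_distinct_set_unique)
    using srt fI setL injg by (auto simp: strict_sorted_iff distinct_map)
  have L3: "filter (\<lambda>x. x \<in> g ` I) [1..<m+1] = sorted_list_of_set (g ` I)"
    by (rule sorted_distinct_set_unique) (use gI fI in \<open>auto simp del: upt_Suc intro: sorted_wrt_filter\<close>)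
  have "\<rho> = map (\<lambda>x. x + int h) (map (\<lambda>i. int (p i)) (map g L))"
    unfolding \<rho>_def using eq setL by auto
  hence s2: "subseq \<rho> (shift_seq (perm_seq m p) (int h))"
    unfolding shift_seq_def perm_seq_def L2[symmetric] L3[symmetric]
    by (metis subseq_filter_left subseq_map)
  have fin: "finite {length \<rho> | \<rho>. exact_pattern \<rho> (perm_seq m p) \<and>
       exact_pattern \<rho> (shift_seq (perm_seq m p) (int h))}"
    by (rule finite_subset[of _ "{..length (perm_seq m p)}"])
       (auto simp: exact_pattern_def dest: list_emb_length)
  have "length \<rho> \<le> ord_int (perm_seq m p) (shift_seq (perm_seq m p) (int h))"
    unfolding ord_int_def
    by (rule Max_ge[OF fin]) (use s1 s2 in \<open>auto simp: exact_pattern_def\<close>)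
  moreover have "length \<rho> = card I" unfolding \<rho>_def L_def by simp
  ultimately show ?thesis by simp
qed

lemma card_steps:
  fixes f :: "nat \<Rightarrow> nat"
  assumes "mono f"
  shows "card {u\<in>{1..n}. f u \<noteq> f (u-1)} + f 0 \<le> f n"
proof (induction n)
  case 0 then show ?case by simp
next
  case (Suc n)
  have eq: "{u\<in>{1..Suc n}. f u \<noteq> f (u-1)} = {u\<in>{1..n}. f u \<noteq> f (u-1)} \<union>
     (if f (Suc n) \<noteq> f n then {Suc n} else {})" by (auto simp: le_Suc_eq)
  have m: "f n \<le> f (Suc n)" using assms by (simp add: monoD)
  show ?case
  proof (cases "f (Suc n) \<noteq> f n")
    case True
    have "card {u\<in>{1..Suc n}. f u \<noteq> f (u-1)} = Suc (card {u\<in>{1..n}. f u \<noteq> f (u-1)})"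
      unfolding eq using True by simp
    then show ?thesis using Suc.IH True m by simp
  next
    case False
    then show ?thesis unfolding eq using Suc.IH m by simp
  qed
qed

definition chainP :: "(nat \<Rightarrow> nat \<Rightarrow> bool) \<Rightarrow> nat \<Rightarrow> nat \<Rightarrow> bool" where
  "chainP ok k u \<longleftrightarrow> (\<exists>x. (\<forall>j\<in>{1..k}. 1 \<le> x j \<and> x j \<le> u \<and> ok (x j) j) \<and>
      (\<forall>i j. 1 \<le> i \<longrightarrow> i < j \<longrightarrow> j \<le> k \<longrightarrow> x i < x j))"

lemma chainP_0: "chainP ok 0 u" unfolding chainP_def by auto

lemma chainP_mono: "chainP ok k u \<Longrightarrow> u \<le> u' \<Longrightarrow> chainP ok k u'"
  unfolding chainP_def by (meson order_trans)

lemma chainP_ext: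
  assumes "chainP ok k (u-1)" "ok u (k+1)" "1 \<le> u"
  shows "chainP ok (k+1) u"
proof -
  obtain x where x: "\<forall>j\<in>{1..k}. 1 \<le> x j \<and> x j \<le> u-1 \<and> ok (x j) j"
    "\<forall>i j. 1 \<le> i \<longrightarrow> i < j \<longrightarrow> j \<le> k \<longrightarrow> x i < x j"
    using assms(1) unfolding chainP_def by blast
  define y where "y = x(k+1 := u)"
  have "\<forall>j\<in>{1..k+1}. 1 \<le> y j \<and> y j \<le> u \<and> ok (y j) j"
  proof
    fix j assume j: "j \<in> {1..k+1}"
    show "1 \<le> y j \<and> y j \<le> u \<and> ok (y j) j"
    proof (cases "j = k+1")
      case True then show ?thesis using assms(2,3) unfolding y_def by simp
    next
      case False
      hence "j \<in> {1..k}" using j by auto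
      then show ?thesis using x(1) False unfolding y_def by fastforce
    qed
  qed
  moreover have "\<forall>i j. 1 \<le> i \<longrightarrow> i < j \<longrightarrow> j \<le> k+1 \<longrightarrow> y i < y j"
  proof (intro allI impI)
    fix i j assume h: "1 \<le> i" "i < j" "j \<le> k+1"
    show "y i < y j"
    proof (cases "j = k+1")
      case True
      then have "i \<le> k" using h by simp
      then show ?thesis using x(1) h True assms(3) unfolding y_def by force
    next
      case False then show ?thesis using x(2) h unfolding y_def by auto
    qed
  qed
  ultimately show ?thesis unfolding chainP_def by blast
qed

lemma chain_or_stair:
  fixes ok :: "nat \<Rightarrow> nat \<Rightarrow> bool" and n m :: nat
  assumes "m \<ge> 1"
  shows "(\<exists>x. (\<forall>i\<in>{1..m}. x i \<in> {1..n} \<and> ok (x i) i) \<and>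
              (\<forall>i j. 1 \<le> i \<longrightarrow> i < j \<longrightarrow> j \<le> m \<longrightarrow> x i < x j))
       \<or> (\<exists>lv S. S \<subseteq> {1..n} \<and> card S + m \<ge> n + 1 \<and>
              (\<forall>u\<in>S. lv u < m \<and> \<not> ok u (lv u + 1)) \<and>
              (\<forall>u\<in>S. \<forall>u'\<in>S. u \<le> u' \<longrightarrow> lv u \<le> lv u'))"
proof (cases "chainP ok m n")
  case True
  then show ?thesis unfolding chainP_def by auto
next
  case False
  define L where "L u = Max {k. k \<le> m \<and> chainP ok k u}" for u
  have fin: "finite {k. k \<le> m \<and> chainP ok k u}" for u by simp
  have ne: "0 \<in> {k. k \<le> m \<and> chainP ok k u}" for u by (simp add: chainP_0)
  have Lin: "L u \<le> m \<and> chainP ok (L u) u" for u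
    using Max_in[OF fin, of u] ne unfolding L_def by blast
  have Lge: "k \<le> m \<Longrightarrow> chainP ok k u \<Longrightarrow> k \<le> L u" for k u
    unfolding L_def by (rule Max_ge[OF fin]) simp
  have monoL: "mono L"
    proof (rule monoI)
    fix u v :: nat assume "u \<le> v"
    hence "chainP ok (L u) v" using Lin[of u] chainP_mono by blast
    thus "L u \<le> L v" using Lge Lin[of u] by blast
  qed
  have Llt: "u \<le> n \<Longrightarrow> L u < m" for u
    proof -
    assume "u \<le> n"
    have "L u \<noteq> m" using Lin[of u] False chainP_mono[OF _ \<open>u \<le> n\<close>] by metis
    thus ?thesis using Lin[of u] by simp
  qed
  define S where "S = {u\<in>{1..n}. L u = L (u-1)}"
  have "card {u\<in>{1..n}. L u \<noteq> L (u-1)} \<le> L n" using card_steps[OF monoL, of n] by simp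
  moreover have "card S + card {u\<in>{1..n}. L u \<noteq> L (u-1)} = n"
  proof -
    have "card S + card {u\<in>{1..n}. L u \<noteq> L (u-1)} = card (S \<union> {u\<in>{1..n}. L u \<noteq> L (u-1)})"
      by (rule card_Un_disjoint[symmetric]) (auto simp: S_def)
    also have "S \<union> {u\<in>{1..n}. L u \<noteq> L (u-1)} = {1..n}" by (auto simp: S_def)
    finally show ?thesis by simp
  qed
  moreover have "L n < m" using Llt by simp
  ultimately have c: "card S + m \<ge> n + 1" by linarith
  have st: "\<forall>u\<in>S. L u < m \<and> \<not> ok u (L u + 1)"
  proof
    fix u assume u: "u \<in> S"
    hence u1: "1 \<le> u" "u \<le> n" "L u = L (u-1)" by (auto simp: S_def)
    have "L u < m" using Llt u1 by simp
    moreover have "\<not> ok u (L u + 1)"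
    proof
      assume "ok u (L u + 1)"
      hence "chainP ok (L (u-1) + 1) u" using chainP_ext Lin u1 by metis
      hence "L (u-1) + 1 \<le> L u" using Lge[of "L (u-1) + 1" u] \<open>L u < m\<close> u1(3) by simp
      thus False using u1 by simp
    qed
    ultimately show "L u < m \<and> \<not> ok u (L u + 1)" by blast
  qed
  have "\<forall>u\<in>S. \<forall>u'\<in>S. u \<le> u' \<longrightarrow> L u \<le> L u'" using monoL by (simp add: monoD)
  moreover have "S \<subseteq> {1..n}" by (auto simp: S_def)
  ultimately have "\<exists>lv S. S \<subseteq> {1..n} \<and> card S + m \<ge> n + 1 \<and>
              (\<forall>u\<in>S. lv u < m \<and> \<not> ok u (lv u + 1)) \<and>
              (\<forall>u\<in>S. \<forall>u'\<in>S. u \<le> u' \<longrightarrow> lv u \<le> lv u')" using c st by (intro exI[of _ L] exI[of _ S]) simp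
  thus ?thesis by (rule disjI2)
qed

lemma bonf:
  fixes E :: "nat \<Rightarrow> 'a set"
  assumes "\<forall>c<K. finite (E c)"
  shows "real (\<Sum>c<K. card (E c)) - (\<Sum>c'<K. \<Sum>c<c'. real (card (E c \<inter> E c')))
         \<le> real (card (\<Union>c<K. E c))"
  using assms
proof (induction K)
  case 0 then show ?case by simp
next
  case (Suc K)
  define U where "U = (\<Union>c<K. E c)"
  have fU: "finite U" using Suc.prems unfolding U_def by auto
  have fE: "finite (E K)" using Suc.prems by auto
  have U: "(\<Union>c<Suc K. E c) = U \<union> E K" unfolding U_def by (auto simp: lessThan_Suc)
  have a: "card (U \<union> E K) + card (U \<inter> E K) = card U + card (E K)"
    using card_Un_Int[OF fU fE] by linarith
  have "U \<inter> E K = (\<Union>c<K. E c \<inter> E K)" unfolding U_def by auto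
  hence b: "card (U \<inter> E K) \<le> (\<Sum>c<K. card (E c \<inter> E K))"
    using card_UN_le[of "{..<K}" "\<lambda>c. E c \<inter> E K"] by simp
  have b': "real (card (U \<inter> E K)) \<le> (\<Sum>c<K. real (card (E c \<inter> E K)))"
    using b by (metis of_nat_le_iff of_nat_sum)
  have a': "real (card (U \<union> E K)) = real (card U) + real (card (E K)) - real (card (U \<inter> E K))"
    using a by (metis add_diff_cancel_right' of_nat_add)
  have IH: "real (\<Sum>c<K. card (E c)) - (\<Sum>c'<K. \<Sum>c<c'. real (card (E c \<inter> E c')))
         \<le> real (card U)" using Suc unfolding U_def by simp
  have s1: "real (\<Sum>c<Suc K. card (E c)) = real (\<Sum>c<K. card (E c)) + real (card (E K))"
    by simp
  have s2: "(\<Sum>c'<Suc K. \<Sum>c<c'. real (card (E c \<inter> E c'))) =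
     (\<Sum>c'<K. \<Sum>c<c'. real (card (E c \<inter> E c'))) + (\<Sum>c<K. real (card (E c \<inter> E K)))"
    by simp
  show ?case unfolding U s1 s2 a' using IH b' by linarith
qed

lemma sum_lin: "(\<Sum>c<K. real c) = real K * (real K - 1) / 2"
proof (induction K)
  case 0 then show ?case by simp
next
  case (Suc K) then show ?case by (simp add: algebra_simps add_divide_distrib)
qed

lemma numerics:
  fixes \<epsilon> \<alpha> \<beta> T I mr x :: real and n :: nat
  assumes "0 < \<epsilon>" "\<epsilon> < 1" "0 < \<alpha>" "0 < \<beta>" "\<alpha> + \<beta> \<le> \<epsilon> / 4"
    and n1: "1 \<le> n"
    and mr: "mr = real n powr (1/2 + \<alpha>)"
    and I: "I = real n powr ((1 - \<epsilon>) * (1/2 + \<alpha>))"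
    and T: "T = real n powr (1/2 + \<beta>) / 4 - real n powr (\<epsilon>/4) / 2"
    and T2: "T > 2"
  shows "1 \<le> mr \<and> mr \<le> real n \<and> 1 \<le> I \<and>
     (\<exists>K::nat. 1 \<le> K \<and> real K \<le> real n - mr + 1 \<and>
        real K * (real n - mr + 1) - T * I * (real K * (real K - 1) / 2) > (real K - 1 + mr) * T)"
proof -
  have nr: "1 \<le> real n" using n1 by simp
  define y where "y = real n powr (1/4)"
  have y0: "0 < y" using n1 unfolding y_def by simp
  have y4: "y ^ 4 = real n"
    unfolding y_def using nr by (simp add: powr_power)
  have y3: "y ^ 3 = real n powr (3/4)"
    unfolding y_def using nr by (simp add: powr_power)
  have m1: "mr \<le> y ^ 3" unfolding mr y3 by (rule powr_mono) (use assms in auto)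
  have b1: "real n powr (1/2 + \<beta>) \<le> y ^ 3" unfolding y3 by (rule powr_mono) (use assms in auto)
  have e1: "1 \<le> real n powr (\<epsilon>/4)" by (rule ge_one_powr_ge_zero) (use assms in auto)
  have Tle: "T \<le> real n powr (1/2 + \<beta>) / 4" using T e1 by simp
  have "y ^ 3 > 10" using T2 T e1 b1 by linarith
  hence y2: "y \<ge> 25/12"
  proof -
    assume h: "y ^ 3 > 10"
    show ?thesis
    proof (rule ccontr)
      assume "\<not> y \<ge> 25/12"
      hence "y ^ 3 \<le> (25/12) ^ 3" by (intro power_mono) (use y0 in auto)
      thus False using h by (simp add: power_divide)
    qed
  qed
  have mr1: "1 \<le> mr" unfolding mr by (rule ge_one_powr_ge_zero) (use assms in auto)
  have I1: "1 \<le> I" unfolding I by (rule ge_one_powr_ge_zero) (use assms in auto)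
  define A where "A = real n - mr + 1 - T"
  have "A \<ge> y^4 - y^3 - y^3/4" unfolding A_def using m1 Tle b1 y4 by linarith
  moreover have "y^3 * (3/5 * y - 5/4) \<ge> 0" using y0 y2 by simp
  ultimately have A1: "A \<ge> 2/5 * real n" using y4 by (simp add: algebra_simps power_numeral_reduce)
  have Apos: "A > 0" using A1 nr by simp
  have TT: "T^2 \<le> real n powr (1 + 2*\<beta>) / 16"
  proof -
    have "T^2 \<le> (real n powr (1/2 + \<beta>) / 4)^2" using Tle T2 by (intro power_mono) auto
    also have "\<dots> = (real n powr (1/2 + \<beta>))^2 / 16" by (simp add: power_divide)
    also have "(real n powr (1/2 + \<beta>))^2 = real n powr (1 + 2*\<beta>)"
    proof -
      have "(real n powr (1/2 + \<beta>))^2 = real n powr (real 2 * (1/2 + \<beta>))"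
        by (rule powr_power) (use nr in auto)
      also have "real 2 * (1/2 + \<beta>) = 1 + 2*\<beta>" by simp
      finally show ?thesis .
    qed
    finally show ?thesis .
  qed
  have Im: "I * mr = real n powr ((1 - \<epsilon>) * (1/2 + \<alpha>) + (1/2 + \<alpha>))"
    unfolding I mr by (rule powr_add[symmetric])
  have "T^2 * (I * mr) \<le> real n powr (1 + 2*\<beta>) / 16 * (I * mr)"
    using TT I1 mr1 by (intro mult_right_mono) auto
  also have "\<dots> = real n powr ((1 + 2*\<beta>) + ((1 - \<epsilon>) * (1/2 + \<alpha>) + (1/2 + \<alpha>))) / 16"
    unfolding Im powr_add[of "real n" "1 + 2*\<beta>" "(1 - \<epsilon>) * (1/2 + \<alpha>) + (1/2 + \<alpha>)"] by simp
  also have "\<dots> \<le> real n powr 2 / 16"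
  proof -
    have "(1 + 2*\<beta>) + ((1 - \<epsilon>) * (1/2 + \<alpha>) + (1/2 + \<alpha>)) \<le> 2"
    proof -
      have "\<epsilon> * \<alpha> \<ge> 0" using assms by simp
      moreover have "(1 + 2*\<beta>) + ((1 - \<epsilon>) * (1/2 + \<alpha>) + (1/2 + \<alpha>)) = 2 + 2*\<alpha> + 2*\<beta> - \<epsilon>/2 - \<epsilon>*\<alpha>"
        by (simp add: field_simps)
      ultimately show ?thesis using assms by linarith
    qed
    hence "real n powr ((1 + 2*\<beta>) + ((1 - \<epsilon>) * (1/2 + \<alpha>) + (1/2 + \<alpha>))) \<le> real n powr 2"
      by (rule powr_mono[OF _ nr])
    thus ?thesis by (rule divide_right_mono) simp
  qed
  also have "real n powr 2 = (real n)^2" using nr by (simp add: powr_realpow')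
  finally have key0: "T^2 * (I * mr) \<le> (real n)^2 / 16" .
  have "A^2 \<ge> (2/5 * real n)^2" using A1 nr by (intro power_mono) auto
  moreover have "(2/5 * real n)^2 = 4/25 * (real n)^2" by (simp add: power2_eq_square)
  moreover have "(real n)^2 > 0" using nr by simp
  moreover have "2 * T^2 * I * mr = 2 * (T^2 * (I * mr))" by (simp add: mult.assoc)
  ultimately have key: "A^2 > 2 * T^2 * I * mr" using key0 by linarith
  define xx where "xx = T * I"
  have "T \<le> T * I" using mult_left_mono[of 1 I T] T2 I1 by simp
  hence xx2: "xx \<ge> 2" unfolding xx_def using T2 by linarith
  define K where "K = nat \<lfloor>A / xx\<rfloor> + 1"
  have Ax0: "A / xx \<ge> 0" using Apos xx2 by simp
  have K1: "real K - 1 \<le> A / xx" "real K > A / xx"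
    unfolding K_def using Ax0 by (simp_all add: of_nat_nat) linarith
  have "A / xx \<le> A" using Apos xx2 by (simp add: divide_le_eq)
  hence Kle: "real K \<le> real n - mr + 1" using K1 T2 unfolding A_def by linarith
  have "xx * (real K - 1) \<le> A" using K1 xx2 by (simp add: pos_le_divide_eq mult.commute)
  hence h1: "A - xx * (real K - 1) / 2 \<ge> A / 2" by simp
  have "real K * (A - xx * (real K - 1) / 2) \<ge> real K * (A / 2)"
    using h1 by (intro mult_left_mono) auto
  moreover have "real K * (A / 2) > (A / xx) * (A / 2)"
    using K1 Apos by (intro mult_strict_right_mono) auto
  moreover have "(A / xx) * (A / 2) = A^2 / (2 * xx)" by (simp add: power2_eq_square)
  moreover have "A^2 / (2 * xx) > (mr - 1) * T"
  proof -
    have "2 * xx * ((mr - 1) * T) < 2 * T^2 * I * mr"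
      unfolding xx_def using T2 I1 by (simp add: power2_eq_square algebra_simps)
    hence "2 * xx * ((mr - 1) * T) < A^2" using key by linarith
    thus ?thesis using xx2 by (simp add: pos_less_divide_eq mult.commute)
  qed
  ultimately have fin: "real K * (A - xx * (real K - 1) / 2) > (mr - 1) * T" by linarith
  have "real K * (real n - mr + 1) - T * I * (real K * (real K - 1) / 2) - (real K - 1 + mr) * T
        = real K * (A - xx * (real K - 1) / 2) - (mr - 1) * T"
    unfolding A_def xx_def by (simp add: algebra_simps)
  hence "real K * (real n - mr + 1) - T * I * (real K * (real K - 1) / 2) > (real K - 1 + mr) * T"
    using fin by linarith
  moreover have "1 \<le> K" unfolding K_def by simp
  moreover have "mr \<le> real n"
  proof -
    have "y^3 * 1 \<le> y^3 * y" using y0 y2 by (intro mult_left_mono) auto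
    moreover have "y^4 = y^3 * y" by (simp add: power_numeral_reduce)
    ultimately show ?thesis using m1 y4 by simp
  qed
  ultimately show ?thesis using Kle mr1 I1 by blast
qed

theorem theorem3p4:
  fixes \<epsilon> \<alpha> \<beta> :: real and n m :: nat and M :: "(nat \<times> nat) set"
    and red :: "nat set \<Rightarrow> bool"
  assumes "0 < \<epsilon>" "\<epsilon> < 1" "0 < \<alpha>" "0 < \<beta>" "\<alpha> + \<beta> \<le> \<epsilon> / 4"
    and "real m = real n powr (1/2 + \<alpha>)"
    and "bip_ordered_matching m M"
    and "\<forall>h\<in>{1..m}. real (ord_int (perm_seq m (match_perm m M))
                          (shift_seq (perm_seq m (match_perm m M)) (int h)))
                   \<le> real n powr ((1 - \<epsilon>) * (1/2 + \<alpha>))"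
  shows "blue_triangle (2*n) red
         \<or> (\<exists>K. red_clique (2*n) red K \<and>
                real (card K) \<ge> real n powr (1/2 + \<beta>) / 4 - real n powr (\<epsilon>/4) / 2)
         \<or> red_bip_copy n red m M"
proof (rule ccontr)
  define T where "T = real n powr (1/2 + \<beta>) / 4 - real n powr (\<epsilon>/4) / 2"
  define I where "I = real n powr ((1 - \<epsilon>) * (1/2 + \<alpha>))"
  define \<pi> where "\<pi> = match_perm m M"
  assume neg: "\<not> ?thesis"
  have nbt: "\<not> blue_triangle (2*n) red" using neg by blast
  have nocl: "real (card K) < T" if "red_clique (2*n) red K" for K
  proof (rule ccontr)
    assume "\<not> real (card K) < T"
    hence "real (card K) \<ge> T" by simp
    thus False using neg that unfolding T_def by blast
  qed
  have nocp: "\<not> red_bip_copy n red m M" using neg by blast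
  have hypI: "\<forall>h\<in>{1..m}. real (ord_int (perm_seq m \<pi>) (shift_seq (perm_seq m \<pi>) (int h))) \<le> I"
    using assms(8) unfolding \<pi>_def I_def by blast
  have T2: "T > 2"
  proof (rule ccontr)
    assume nT: "\<not> T > 2"
    show False
    proof (cases "n = 0")
      case True
      hence "T = 0" unfolding T_def by simp
      moreover have "red_clique (2*n) red {}" unfolding red_clique_def by simp
      ultimately show False using nocl[of "{}"] by simp
    next
      case False
      hence n1: "n \<ge> 1" by simp
      show False
      proof (cases "T \<le> 1")
        case True
        have "red_clique (2*n) red {1}" unfolding red_clique_def using n1 by simp
        then show False using nocl[of "{1}"] True by simp
      next
        case False
        have "n \<noteq> 1"
        proof
          assume "n = 1" hence "T = 1/4 - 1/2" unfolding T_def by simp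
          thus False using False by simp
        qed
        hence n2: "3 \<le> 2*n" using n1 by simp
        have cl2: "red {a,b} \<Longrightarrow> 1 \<le> a \<Longrightarrow> a < b \<Longrightarrow> b \<le> 3 \<Longrightarrow> False" for a b
        proof -
          assume h: "red {a,b}" "1 \<le> a" "a < b" "b \<le> 3"
          have "red_clique (2*n) red {a,b}" unfolding red_clique_def using h n2
            by (auto simp: insert_commute)
          moreover have "card {a,b} = 2" using h by simp
          ultimately show False using nocl[of "{a,b}"] nT by simp
        qed
        have "blue_triangle (2*n) red" unfolding blue_triangle_def
          using cl2[of 1 2] cl2[of 1 3] cl2[of 2 3] n2
          by (intro exI[of _ 1] exI[of _ 2] exI[of _ 3]) auto
        then show False using nbt by simp
      qed
    qed
  qed
  have n1: "n \<ge> 1"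
  proof (rule ccontr)
    assume "\<not> n \<ge> 1" hence "n = 0" by simp
    hence "T = 0" unfolding T_def by simp
    thus False using T2 by simp
  qed
  from numerics[OF assms(1-5) n1 assms(6) I_def T_def T2]
  obtain K :: nat where m1: "1 \<le> real m" and mn: "real m \<le> real n" and I1: "1 \<le> I"
    and K1: "1 \<le> K" and Kle: "real K \<le> real n - real m + 1"
    and Kineq: "real K * (real n - real m + 1) - T * I * (real K * (real K - 1) / 2)
                  > (real K - 1 + real m) * T"
    by blast
  have m1': "1 \<le> m" using m1 by simp
  have Kle': "K + m \<le> n + 1" using Kle by linarith
  have bip: "\<forall>(i,j)\<in>M. i \<in> {1..m} \<and> j \<in> {m+1..2*m}" "\<forall>i\<in>{1..m}. \<exists>!j. (i,j) \<in> M"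
    "\<forall>j\<in>{m+1..2*m}. \<exists>!i. (i,j) \<in> M"
    using assms(7) unfolding bip_ordered_matching_def by blast+
  have piE: "\<pi> i = j - m \<and> j \<in> {m+1..2*m}" if "(i,j) \<in> M" for i j
  proof -
    have ij: "i \<in> {1..m}" "j \<in> {m+1..2*m}" using bip(1) that by auto
    have "\<pi> i = j - m" unfolding \<pi>_def match_perm_def
    proof (rule the_equality)
      show "(i, j - m + m) \<in> M" using that ij by simp
    next
      fix j' assume "(i, j' + m) \<in> M"
      hence "j' + m = j" using bip(2) ij(1) that by blast
      thus "j' = j - m" by simp
    qed
    thus ?thesis using ij by simp
  qed
  have Mhas: "(i, m + \<pi> i) \<in> M \<and> \<pi> i \<in> {1..m}" if hi: "i \<in> {1..m}" for i
  proof -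
    obtain j where j: "(i,j) \<in> M" using ex1_implies_ex[OF bspec[OF bip(2) hi]] by blast
    have e: "\<pi> i = j - m" "m + 1 \<le> j" "j \<le> 2*m" using piE[OF j] by auto
    hence "m + \<pi> i = j" by simp
    thus ?thesis using j e by auto
  qed
  have Medge: "i \<in> {1..m} \<and> j = m + \<pi> i" if "(i,j) \<in> M" for i j
  proof -
    have e: "\<pi> i = j - m" "m + 1 \<le> j" "j \<le> 2*m" using piE[OF that] by auto
    have "i \<in> {1..m}" using bip(1) that by blast
    thus ?thesis using e by simp
  qed
  have piinj: "i = i'" if "i \<in> {1..m}" "i' \<in> {1..m}" "\<pi> i = \<pi> i'" for i i'
  proof -
    have "(i, m + \<pi> i) \<in> M" "(i', m + \<pi> i) \<in> M" "m + \<pi> i \<in> {m+1..2*m}"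
      using Mhas[OF that(1)] Mhas[OF that(2)] that(3) by auto
    thus ?thesis using bspec[OF bip(3), of "m + \<pi> i"] by blast
  qed
  define B where "B v = {u \<in> {1..n}. \<not> red {u,v}}" for v
  have finB: "finite (B v)" for v unfolding B_def by simp
  have Bsmall: "real (card (B v)) < T" if v: "v \<in> {n+1..2*n}" for v
  proof -
    have "red_clique (2*n) red (B v)" unfolding red_clique_def
    proof (intro conjI ballI impI)
      show "B v \<subseteq> {1..2*n}" unfolding B_def by auto
    next
      fix x y assume xy: "x \<in> B v" "y \<in> B v" "x \<noteq> y"
      show "red {x,y}"
      proof (rule ccontr)
        assume nr: "\<not> red {x,y}"
        have "blue_triangle (2*n) red"
        proof (cases "x < y")
          case True
          then show ?thesis unfolding blue_triangle_def using xy nr v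
            by (intro exI[of _ x] exI[of _ y] exI[of _ v]) (auto simp: B_def)
        next
          case False
          hence "y < x" using xy by simp
          then show ?thesis unfolding blue_triangle_def using xy nr v
            by (intro exI[of _ y] exI[of _ x] exI[of _ v]) (auto simp: B_def insert_commute)
        qed
        thus False using nbt by simp
      qed
    qed
    thus ?thesis using nocl by blast
  qed
  have block: "\<forall>c<K. \<exists>lv S. S \<subseteq> {1..n} \<and> card S + m \<ge> n + 1 \<and>
              (\<forall>u\<in>S. lv u < m \<and> \<not> red {u, n + c + \<pi> (lv u + 1)}) \<and>
              (\<forall>u\<in>S. \<forall>u'\<in>S. u \<le> u' \<longrightarrow> lv u \<le> lv u')"
  proof (intro allI impI)
    fix c assume cK: "c < K"
    have cm: "c + m \<le> n" using cK Kle' by simp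
    from chain_or_stair[where ok="\<lambda>u i. red {u, n + c + \<pi> i}" and n=n, OF m1']
    show "\<exists>lv S. S \<subseteq> {1..n} \<and> card S + m \<ge> n + 1 \<and>
              (\<forall>u\<in>S. lv u < m \<and> \<not> red {u, n + c + \<pi> (lv u + 1)}) \<and>
              (\<forall>u\<in>S. \<forall>u'\<in>S. u \<le> u' \<longrightarrow> lv u \<le> lv u')"
    proof
      assume "\<exists>x. (\<forall>i\<in>{1..m}. x i \<in> {1..n} \<and> red {x i, n + c + \<pi> i}) \<and>
              (\<forall>i j. 1 \<le> i \<longrightarrow> i < j \<longrightarrow> j \<le> m \<longrightarrow> x i < x j)"
      then obtain x where x: "\<forall>i\<in>{1..m}. x i \<in> {1..n} \<and> red {x i, n + c + \<pi> i}"
        "\<forall>i j. 1 \<le> i \<longrightarrow> i < j \<longrightarrow> j \<le> m \<longrightarrow> x i < x j" by blast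
      define \<phi> where "\<phi> i = (if i \<le> m then x i else n + c + (i - m))" for i
      have "red_bip_copy n red m M" unfolding red_bip_copy_def
      proof (intro exI[of _ \<phi>] conjI)
        show "strict_mono_on {1..2*m} \<phi>"
        proof (rule strict_mono_onI)
          fix r s assume rs: "r \<in> {1..2*m}" "s \<in> {1..2*m}" "r < s"
          show "\<phi> r < \<phi> s"
          proof (cases "s \<le> m")
            case True then show ?thesis using x(2) rs unfolding \<phi>_def by auto
          next
            case False
            show ?thesis
            proof (cases "r \<le> m")
              case True
              then have "x r \<le> n" using x(1) rs by auto
              then show ?thesis using False True unfolding \<phi>_def by auto
            next
              case False2: False
              then show ?thesis using False rs unfolding \<phi>_def by auto
            qed
          qed
        qed
      next
        show "\<phi> ` {1..m} \<subseteq> {1..n}" using x(1) unfolding \<phi>_def by auto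
      next
        show "\<phi> ` {m+1..2*m} \<subseteq> {n+1..2*n}" using cm unfolding \<phi>_def by auto
      next
        show "\<forall>(i,j)\<in>M. red {\<phi> i, \<phi> j}"
        proof (intro ballI, clarify)
          fix i j assume "(i,j) \<in> M"
          from Medge[OF this] have ij: "i \<in> {1..m}" "j = m + \<pi> i" by auto
          have "\<pi> i \<ge> 1" using Mhas ij by auto
          hence "\<phi> i = x i" "\<phi> j = n + c + \<pi> i" using ij unfolding \<phi>_def by auto
          thus "red {\<phi> i, \<phi> j}" using x(1) ij by simp
        qed
      qed
      thus ?thesis using nocp by simp
    qed
  qed
  define Q where "Q c lv S \<longleftrightarrow> S \<subseteq> {1..n} \<and> card S + m \<ge> n + 1 \<and>
              (\<forall>u\<in>S. lv u < m \<and> \<not> red {u, n + c + \<pi> (lv u + 1)}) \<and>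
              (\<forall>u\<in>S. \<forall>u'\<in>S. u \<le> u' \<longrightarrow> lv u \<le> lv u')" for c lv S
  have "\<forall>c\<in>{..<K}. \<exists>p. Q c (fst p) (snd p)"
  proof
    fix c assume "c \<in> {..<K}"
    hence "c < K" by simp
    hence "\<exists>lv S. Q c lv S" using block unfolding Q_def by simp
    then obtain lv S where "Q c lv S" by blast
    thus "\<exists>p. Q c (fst p) (snd p)" by (intro exI[of _ "(lv,S)"]) simp
  qed
  then obtain f where f: "\<forall>c\<in>{..<K}. Q c (fst (f c)) (snd (f c))" by (rule bchoice[elim_format]) blast
  define LV where "LV c = fst (f c)" for c
  define SS where "SS c = snd (f c)" for c
  have SS: "\<forall>c<K. SS c \<subseteq> {1..n} \<and> card (SS c) + m \<ge> n + 1 \<and>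
              (\<forall>u\<in>SS c. LV c u < m \<and> \<not> red {u, n + c + \<pi> (LV c u + 1)}) \<and>
              (\<forall>u\<in>SS c. \<forall>u'\<in>SS c. u \<le> u' \<longrightarrow> LV c u \<le> LV c u')"
  proof (intro allI impI)
    fix c assume "c < K"
    hence "Q c (LV c) (SS c)" using f unfolding LV_def SS_def by simp
    thus "SS c \<subseteq> {1..n} \<and> card (SS c) + m \<ge> n + 1 \<and>
              (\<forall>u\<in>SS c. LV c u < m \<and> \<not> red {u, n + c + \<pi> (LV c u + 1)}) \<and>
              (\<forall>u\<in>SS c. \<forall>u'\<in>SS c. u \<le> u' \<longrightarrow> LV c u \<le> LV c u')"
      unfolding Q_def by simp
  qed
  have SSsub: "SS c \<subseteq> {1..n}" if "c < K" for c using SS that by blast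
  have SScard: "card (SS c) + m \<ge> n + 1" if "c < K" for c using SS that by blast
  have SSlv: "LV c u < m \<and> \<not> red {u, n + c + \<pi> (LV c u + 1)}" if "c < K" "u \<in> SS c" for c u
    using SS that by blast
  have SSmono: "LV c u \<le> LV c u'" if "c < K" "u \<in> SS c" "u' \<in> SS c" "u \<le> u'" for c u u'
    using SS that by blast
  define E where "E c = (\<lambda>u. (u, n + c + \<pi> (LV c u + 1))) ` SS c" for c
  have finE: "\<forall>c<K. finite (E c)"
  proof (intro allI impI)
    fix c assume "c < K"
    hence "SS c \<subseteq> {1..n}" using SS by simp
    hence "finite (SS c)" using finite_subset by blast
    thus "finite (E c)" unfolding E_def by simp
  qed
  have cardE: "card (E c) = card (SS c)" for c
    unfolding E_def by (rule card_image) (auto simp: inj_on_def)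
  have Ein: "E c \<subseteq> (\<Union>v\<in>{n+1..n+K-1+m}. (\<lambda>u. (u,v)) ` B v)" if cK: "c < K" for c
  proof
    fix p assume "p \<in> E c"
    then obtain u where u: "u \<in> SS c" "p = (u, n + c + \<pi> (LV c u + 1))" unfolding E_def by blast
    have lv: "LV c u < m" "\<not> red {u, n + c + \<pi> (LV c u + 1)}" using SSlv[OF cK u(1)] by auto
    have "\<pi> (LV c u + 1) \<in> {1..m}" using Mhas lv by simp
    moreover have "u \<in> {1..n}" using SSsub[OF cK] u by blast
    ultimately show "p \<in> (\<Union>v\<in>{n+1..n+K-1+m}. (\<lambda>u. (u,v)) ` B v)"
      using u lv cK by (auto simp: B_def)
  qed
  have Wsub: "{n+1..n+K-1+m} \<subseteq> {n+1..2*n}" using Kle' K1 by auto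
  have "card (\<Union>c<K. E c) \<le> card (\<Union>v\<in>{n+1..n+K-1+m}. (\<lambda>u. (u,v)) ` B v)"
    by (rule card_mono) (simp add: finB, rule UN_least, rule Ein, simp)
  also have "\<dots> \<le> (\<Sum>v\<in>{n+1..n+K-1+m}. card ((\<lambda>u. (u,v)) ` B v))" by (rule card_UN_le) simp
  also have "\<dots> \<le> (\<Sum>v\<in>{n+1..n+K-1+m}. card (B v))" by (intro sum_mono card_image_le finB)
  finally have U1: "real (card (\<Union>c<K. E c)) \<le> (\<Sum>v\<in>{n+1..n+K-1+m}. real (card (B v)))"
    by (metis of_nat_le_iff of_nat_sum)
  also have "\<dots> \<le> (\<Sum>v\<in>{n+1..n+K-1+m}. T)"
    by (intro sum_mono less_imp_le Bsmall) (use Wsub in auto)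
  also have "\<dots> = (real K - 1 + real m) * T" using K1 by (simp add: of_nat_diff)
  finally have Ub: "real (card (\<Union>c<K. E c)) \<le> (real K - 1 + real m) * T" .
  have "(\<Sum>c<K. real n - real m + 1) \<le> (\<Sum>c<K. real (card (E c)))"
  proof (rule sum_mono)
    fix c assume "c \<in> {..<K}"
    hence "card (SS c) + m \<ge> n + 1" using SScard by simp
    thus "real n - real m + 1 \<le> real (card (E c))" unfolding cardE by linarith
  qed
  hence Lb: "real K * (real n - real m + 1) \<le> real (\<Sum>c<K. card (E c))" by simp
  have pair: "real (card (E c \<inter> E c')) \<le> T * I" if cc: "c < c'" "c' < K" for c c'
  proof -
    define P where "P = E c \<inter> E c'"
    define V where "V = snd ` P"
    have finP: "finite P" unfolding P_def using finE cc by auto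
    have Psub: "P \<subseteq> (\<Union>v\<in>V. (\<lambda>u. (u,v)) ` B v)"
    proof
      fix p assume pP: "p \<in> P"
      obtain u v where p: "p = (u,v)" by fastforce
      have "p \<in> E c" using pP unfolding P_def by simp
      then obtain u' where u': "u' \<in> SS c" "p = (u', n + c + \<pi> (LV c u' + 1))" unfolding E_def by blast
      have cK: "c < K" using cc by simp
      have "u' \<in> {1..n}" "\<not> red {u', n + c + \<pi> (LV c u' + 1)}" using SSsub[OF cK] SSlv[OF cK u'(1)] u'(1) by auto
      hence "u \<in> {1..n}" "\<not> red {u, v}" using u'(2) p by auto
      moreover have "v \<in> V" unfolding V_def using pP p by force
      ultimately show "p \<in> (\<Union>v\<in>V. (\<lambda>u. (u,v)) ` B v)" using p by (auto simp: B_def)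
    qed
    have finV: "finite V" unfolding V_def using finP by simp
    have VW: "V \<subseteq> {n+1..2*n}"
    proof
      fix v assume "v \<in> V"
      then obtain u where "(u,v) \<in> E c" unfolding V_def P_def by force
      then show "v \<in> {n+1..2*n}" using Ein[of c] cc Wsub by auto
    qed
    define Iset where "Iset = {i. \<exists>u \<in> SS c \<inter> SS c'. i = LV c u + 1 \<and>
        n + c + \<pi> (LV c u + 1) = n + c' + \<pi> (LV c' u + 1)}"
    have Iset_sub: "Iset \<subseteq> {1..m}"
    proof
      fix i assume "i \<in> Iset"
      then obtain u where u: "u \<in> SS c" "i = LV c u + 1" unfolding Iset_def by blast
      have "LV c u < m" using SSlv[of c u] cc u(1) by simp
      thus "i \<in> {1..m}" using u by simp
    qed
    have VI: "V \<subseteq> (\<lambda>i. n + c + \<pi> i) ` Iset"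
    proof
      fix v assume "v \<in> V"
      then obtain u where uv: "(u,v) \<in> E c" "(u,v) \<in> E c'" unfolding V_def P_def by force
      have a: "u \<in> SS c" "v = n + c + \<pi> (LV c u + 1)" using uv(1) unfolding E_def by auto
      have b: "u \<in> SS c'" "v = n + c' + \<pi> (LV c' u + 1)" using uv(2) unfolding E_def by auto
      have "LV c u + 1 \<in> Iset" unfolding Iset_def using a b by blast
      thus "v \<in> (\<lambda>i. n + c + \<pi> i) ` Iset" using a by blast
    qed
    have finI: "finite Iset" using Iset_sub finite_subset by blast
    have "card V \<le> card ((\<lambda>i. n + c + \<pi> i) ` Iset)" by (rule card_mono[OF _ VI]) (use finI in simp)
    also have "\<dots> \<le> card Iset" by (rule card_image_le[OF finI])
    finally have cardV: "card V \<le> card Iset" .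
    define h where "h = c' - c"
    have h1: "1 \<le> h" unfolding h_def using cc by simp
    have witness: "\<exists>u \<in> SS c \<inter> SS c'. i = LV c u + 1 \<and> \<pi> i = \<pi> (LV c' u + 1) + h
        \<and> LV c' u + 1 \<in> {1..m}" if hi: "i \<in> Iset" for i
    proof -
      obtain u where u: "u \<in> SS c \<inter> SS c'" "i = LV c u + 1"
        "n + c + \<pi> (LV c u + 1) = n + c' + \<pi> (LV c' u + 1)"
        using hi unfolding Iset_def by blast
      have "LV c' u < m" using SSlv[of c' u] cc u(1) by simp
      moreover have "\<pi> i = \<pi> (LV c' u + 1) + h" using u(2,3) cc unfolding h_def by simp
      ultimately show ?thesis using u(1,2) by auto
    qed
    have "real (card Iset) \<le> I"
    proof (cases "h \<le> m")
      case False
      have "Iset = {}"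
      proof (rule ccontr)
        assume "Iset \<noteq> {}"
        then obtain i where i: "i \<in> Iset" by blast
        then obtain u where "\<pi> i = \<pi> (LV c' u + 1) + h" using witness by blast
        moreover have "\<pi> i \<le> m" using Mhas Iset_sub i by auto
        ultimately show False using False by simp
      qed
      thus ?thesis using I1 by simp
    next
      case True
      define g where "g i = (THE j. j \<in> {1..m} \<and> \<pi> i = \<pi> j + h)" for i
      have gw: "g i = LV c' u + 1" if "i \<in> Iset" "u \<in> SS c \<inter> SS c'" "i = LV c u + 1"
         "\<pi> i = \<pi> (LV c' u + 1) + h" "LV c' u + 1 \<in> {1..m}" for i u
        unfolding g_def
      proof (rule the_equality)
        show "LV c' u + 1 \<in> {1..m} \<and> \<pi> i = \<pi> (LV c' u + 1) + h" using that by simp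
      next
        fix j assume "j \<in> {1..m} \<and> \<pi> i = \<pi> j + h"
        thus "j = LV c' u + 1" using piinj[of j "LV c' u + 1"] that by simp
      qed
      have gp: "g i \<in> {1..m} \<and> \<pi> i = \<pi> (g i) + h" if hi: "i \<in> Iset" for i
      proof -
        obtain u where u: "u \<in> SS c \<inter> SS c'" "i = LV c u + 1"
            "\<pi> i = \<pi> (LV c' u + 1) + h" "LV c' u + 1 \<in> {1..m}"
          using witness[OF hi] by blast
        show ?thesis using gw[OF hi u] u by simp
      qed
      have sm: "strict_mono_on Iset g"
      proof (rule strict_mono_onI)
        fix i1 i2 assume ii: "i1 \<in> Iset" "i2 \<in> Iset" "i1 < i2"
        obtain u1 where u1: "u1 \<in> SS c \<inter> SS c'" "i1 = LV c u1 + 1"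
            "\<pi> i1 = \<pi> (LV c' u1 + 1) + h" "LV c' u1 + 1 \<in> {1..m}"
          using witness[OF ii(1)] by blast
        obtain u2 where u2: "u2 \<in> SS c \<inter> SS c'" "i2 = LV c u2 + 1"
            "\<pi> i2 = \<pi> (LV c' u2 + 1) + h" "LV c' u2 + 1 \<in> {1..m}"
          using witness[OF ii(2)] by blast
        have "u1 < u2"
        proof (rule ccontr)
          assume "\<not> u1 < u2"
          hence "LV c u2 \<le> LV c u1" using SSmono[of c u2 u1] cc u1(1) u2(1) by simp
          thus False using ii u1 u2 by simp
        qed
        hence le: "LV c' u1 \<le> LV c' u2" using SSmono[of c' u1 u2] cc u1(1) u2(1) by simp
        have g1: "g i1 = LV c' u1 + 1" using gw[OF ii(1) u1] .
        have g2: "g i2 = LV c' u2 + 1" using gw[OF ii(2) u2] .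
        have "g i1 \<noteq> g i2"
        proof
          assume "g i1 = g i2"
          hence "\<pi> i1 = \<pi> i2" using gp[OF ii(1)] gp[OF ii(2)] by simp
          hence "i1 = i2" using piinj Iset_sub ii by blast
          thus False using ii by simp
        qed
        thus "g i1 < g i2" using g1 g2 le by simp
      qed
      have "card Iset \<le> ord_int (perm_seq m \<pi>) (shift_seq (perm_seq m \<pi>) (int h))"
        by (rule common_pattern[OF Iset_sub _ sm]) (use gp in auto)
      moreover have "real (ord_int (perm_seq m \<pi>) (shift_seq (perm_seq m \<pi>) (int h))) \<le> I"
        using hypI True h1 by simp
      ultimately show ?thesis by linarith
    qed
    hence cV: "real (card V) \<le> I" using cardV by linarith
    have "card P \<le> card (\<Union>v\<in>V. (\<lambda>u. (u,v)) ` B v)"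
      by (rule card_mono) (use Psub finV finB in auto)
    also have "\<dots> \<le> (\<Sum>v\<in>V. card ((\<lambda>u. (u,v)) ` B v))" by (rule card_UN_le[OF finV])
    also have "\<dots> \<le> (\<Sum>v\<in>V. card (B v))" by (intro sum_mono card_image_le finB)
    finally have "real (card P) \<le> (\<Sum>v\<in>V. real (card (B v)))"
      by (metis of_nat_le_iff of_nat_sum)
    also have "\<dots> \<le> (\<Sum>v\<in>V. T)"
      by (intro sum_mono less_imp_le Bsmall) (use VW in auto)
    also have "\<dots> = real (card V) * T" by simp
    also have "\<dots> \<le> I * T" using cV T2 by (intro mult_right_mono) auto
    finally show ?thesis unfolding P_def by (simp add: mult.commute)
  qed
  have "(\<Sum>c'<K. \<Sum>c<c'. real (card (E c \<inter> E c'))) \<le> (\<Sum>c'<K. \<Sum>c<c'. T * I)"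
    by (intro sum_mono pair) auto
  also have "\<dots> = T * I * (\<Sum>c'<K. real c')" by (simp add: sum_distrib_left mult.commute)
  also have "\<dots> = T * I * (real K * (real K - 1) / 2)" by (simp add: sum_lin)
  finally have Db: "(\<Sum>c'<K. \<Sum>c<c'. real (card (E c \<inter> E c'))) \<le> T * I * (real K * (real K - 1) / 2)" .
  have "real (\<Sum>c<K. card (E c)) - (\<Sum>c'<K. \<Sum>c<c'. real (card (E c \<inter> E c')))
         \<le> real (card (\<Union>c<K. E c))" by (rule bonf[OF finE])
  thus False using Ub Lb Db Kineq by linarith
qed

end
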